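(* Let $n\ge 2$ and $1\le m\le n-1$ be integers, and let $\alpha=(\alpha_0,\dots,\alpha_m)$ and $\beta=(\beta_0,\dots,\beta_m)$ be sequences of complex numbers. Let $A = T^{(\alpha,m)} - G^{(\alpha,m)}$ and $B = T^{(\beta,m)} - G^{(\beta,m)}$, where $T^{(\xi,m)}$ and $G^{(\xi,m)}$ are the $n\times n$ matrices defined in the context. Assume that $B$ is invertible. Set $h = \frac{1}{n+1/2}$ and, for $j=1,\dots,n$, $$\lambda_j = \frac{\alpha_0 + 2\sum_{l=1}^{m}\alpha_l\cos(l j\pi h)}{\beta_0 + 2\sum_{l=1}^{m}\beta_l\cos(l j\pi h)},\qquad \boldsymbol{x}_j=(x_{j,1},\dots,x_{j,n})^T,\quad x_{j,k} = C\sin\!\big(j\pi(n-k+1/2)h\big),\ k=1,\dots,n,$$ where $C\neq 0$ is a constant. Then for every $j=1,\dots,n$, $(\lambda_j,\boldsymbol{x}_j)$ is an eigenpair of the generalised matrix eigenvalue problem $A\boldsymbol{x}=\lambda B\boldsymbol{x}$, i.e. $A\boldsymbol{x}_j=\lambda_j B\boldsymbol{x}_j$.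
   Context: For a sequence $\xi=(\xi_0,\xi_1,\dots,\xi_m)$ of complex numbers and $m\le n-1$, $T^{(\xi,m)}\in\mathbb{C}^{n\times n}$ is the symmetric banded Toeplitz matrix with entries $T^{(\xi,m)}_{j,j+k}=\xi_{|k|}$ if $|k|\le m$ (for all $j$ and integers $k$ with $1\le j, j+k\le n$) and all other entries $0$. $H^{(\xi,m)}\in\mathbb{C}^{n\times n}$ is the matrix with entries $H^{(\xi,m)}_{j,k}=\xi_{j+k-1}$ for $j=1,\dots,m$, $k=1,\dots,m-j+1$; $H^{(\xi,m)}_{n-j+1,\,n-k+1}=\xi_{j+k}$ for $j=1,\dots,m-1$, $k=1,\dots,m-j$; and all other entries $0$. $G^{(\xi,m)}$ is the anti-diagonal transpose (flip across the anti-diagonal) of $H^{(\xi,m)}$, i.e. $G^{(\xi,m)}_{j,k}=H^{(\xi,m)}_{n+1-k,\,n+1-j}$ for all $j,k=1,\dots,n$. *)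

theory Defs
  imports Complex_Main "Jordan_Normal_Form.Matrix"
begin

text \<open>Matrices are n x n matrices of the Jordan_Normal_Form library (0-based indices);
  the entry functions below are written with the paper's 1-based indices.\<close>

definition T_entry :: "nat \<Rightarrow> (nat \<Rightarrow> complex) \<Rightarrow> nat \<Rightarrow> nat \<Rightarrow> complex" where
  "T_entry m xi j k = (if \<bar>int k - int j\<bar> \<le> int m then xi (nat \<bar>int k - int j\<bar>) else 0)"

definition H_entry :: "nat \<Rightarrow> nat \<Rightarrow> (nat \<Rightarrow> complex) \<Rightarrow> nat \<Rightarrow> nat \<Rightarrow> complex" where
  "H_entry n m xi r c =
     (if 1 \<le> r \<and> r \<le> m \<and> 1 \<le> c \<and> c \<le> m - r + 1 then xi (r + c - 1)
      else if (\<exists>j k. 1 \<le> j \<and> j \<le> m - 1 \<and> 1 \<le> k \<and> k \<le> m - j \<and> r = n - j + 1 \<and> c = n - k + 1)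
      then xi ((n + 1 - r) + (n + 1 - c))
      else 0)"

definition T_mat :: "nat \<Rightarrow> nat \<Rightarrow> (nat \<Rightarrow> complex) \<Rightarrow> complex mat" where
  "T_mat n m xi = mat n n (\<lambda>(i, k). T_entry m xi (i + 1) (k + 1))"

definition H_mat :: "nat \<Rightarrow> nat \<Rightarrow> (nat \<Rightarrow> complex) \<Rightarrow> complex mat" where
  "H_mat n m xi = mat n n (\<lambda>(i, k). H_entry n m xi (i + 1) (k + 1))"

text \<open>G is the flip of H across the anti-diagonal: G(j,k) = H(n+1-k, n+1-j) (1-based).\<close>
definition G_mat :: "nat \<Rightarrow> nat \<Rightarrow> (nat \<Rightarrow> complex) \<Rightarrow> complex mat" where
  "G_mat n m xi = mat n n (\<lambda>(i, k). H_entry n m xi (n - k) (n - i))"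

end

theory Submission
  imports Defs
begin

lemma delta_sum:
  fixes f :: "int \<Rightarrow> complex"
  shows "(\<Sum>d\<in>D. f d * (if d = a then 1 else 0)) = (if a \<in> D \<and> finite D then f a else 0)"
proof (cases "finite D")
  case True then show ?thesis by (simp add: if_distrib[where f="\<lambda>x. f _ * x"] sum.delta cong: if_cong)
qed simp

lemma core:
  fixes \<xi> :: "nat \<Rightarrow> complex" and t :: "int \<Rightarrow> complex" and n m :: nat and i :: int
  assumes mn: "m \<le> n - 1" and i0: "0 \<le> i" and iN: "i < int n"
    and t1: "t (-1) = 0" and t2: "\<And>k. t (-2-k) = - t k" and t3: "\<And>k. t (2 * int n - 1 - k) = - t k"
  shows "(\<Sum>k\<in>{0..<int n}. ((if \<bar>k - i\<bar> \<le> int m then \<xi> (nat \<bar>k - i\<bar>) else 0)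
            - (if 2 * int n \<le> int m + 1 + i + k then \<xi> (nat (2 * int n - 1 - i - k)) else 0)
            - (if i + k + 2 \<le> int m then \<xi> (nat (i + k + 2)) else 0)) * t k)
     = (\<Sum>d\<in>{-int m..int m}. \<xi> (nat \<bar>d\<bar>) * t (i + d))"
proof -
  let ?K = "{0..<int n}" and ?D = "{-int m..int m}"
  define e where "e k d = ((if d = k - i then 1 else 0) - (if d = -2-i-k then 1 else 0)
        - (if d = 2 * int n - 1 - i - k then 1 else 0) :: complex)" for k d
  have M: "((if \<bar>k - i\<bar> \<le> int m then \<xi> (nat \<bar>k - i\<bar>) else 0)
            - (if 2 * int n \<le> int m + 1 + i + k then \<xi> (nat (2 * int n - 1 - i - k)) else 0)
            - (if i + k + 2 \<le> int m then \<xi> (nat (i + k + 2)) else 0))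
        = (\<Sum>d\<in>?D. \<xi> (nat \<bar>d\<bar>) * e k d)" if k: "k \<in> ?K" for k
  proof -
    have "(\<Sum>d\<in>?D. \<xi> (nat \<bar>d\<bar>) * e k d) =
       (\<Sum>d\<in>?D. \<xi> (nat \<bar>d\<bar>) * (if d = k - i then 1 else 0))
     - (\<Sum>d\<in>?D. \<xi> (nat \<bar>d\<bar>) * (if d = -2-i-k then 1 else 0))
     - (\<Sum>d\<in>?D. \<xi> (nat \<bar>d\<bar>) * (if d = 2 * int n - 1 - i - k then 1 else 0))"
      unfolding e_def right_diff_distrib sum_subtractf by (rule refl)
    also have "\<dots> = ((if \<bar>k - i\<bar> \<le> int m then \<xi> (nat \<bar>k - i\<bar>) else 0)
            - (if 2 * int n \<le> int m + 1 + i + k then \<xi> (nat (2 * int n - 1 - i - k)) else 0)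
            - (if i + k + 2 \<le> int m then \<xi> (nat (i + k + 2)) else 0))"
      unfolding delta_sum using k i0 iN mn
      by (auto simp: abs_if split: if_splits intro!: arg_cong[where f=\<xi>])
    finally show ?thesis by simp
  qed
  have "(\<Sum>k\<in>?K. (\<Sum>d\<in>?D. \<xi> (nat \<bar>d\<bar>) * e k d) * t k)
      = (\<Sum>d\<in>?D. \<xi> (nat \<bar>d\<bar>) * (\<Sum>k\<in>?K. e k d * t k))"
    by (simp add: sum_distrib_left sum_distrib_right sum.swap[of _ ?K] mult.assoc)
  also have "\<dots> = (\<Sum>d\<in>?D. \<xi> (nat \<bar>d\<bar>) * t (i + d))"
  proof (rule sum.cong[OF refl])
    fix d assume d: "d \<in> ?D"
    have "(\<Sum>k\<in>?K. e k d * t k) = (\<Sum>k\<in>?K. (if k = i + d then t k else 0))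
       - (\<Sum>k\<in>?K. (if k = -2-i-d then t k else 0))
       - (\<Sum>k\<in>?K. (if k = 2 * int n - 1 - i - d then t k else 0))"
    proof -
      have "e k d * t k = (if k = i + d then t k else 0) - (if k = -2-i-d then t k else 0)
          - (if k = 2 * int n - 1 - i - d then t k else 0)" for k
        unfolding e_def by (auto; presburger)
      then show ?thesis by (simp only: sum_subtractf)
    qed
    also have "\<dots> = (if i + d \<in> ?K then t (i+d) else 0) - (if -2-i-d \<in> ?K then t (-2-i-d) else 0)
        - (if 2 * int n - 1 - i - d \<in> ?K then t (2 * int n - 1 - i - d) else 0)"
      by (simp only: sum.delta finite_atLeastLessThan_int)
    also have "\<dots> = t (i + d)"
    proof -
      consider "0 \<le> i + d" "i + d < int n" | "i + d = -1" | "i + d < -1" | "i + d \<ge> int n" by linarith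
      then show ?thesis
      proof cases
        case 3
        have "t (i+d) = t (-2 - (-2-i-d))" by simp
        then have "t (i+d) = - t (-2-i-d)" by (simp only: t2)
        then show ?thesis using 3 d i0 iN mn by auto
      next
        case 4
        have "t (i+d) = t (2 * int n - 1 - (2 * int n - 1 - i - d))" by simp
        then have "t (i+d) = - t (2 * int n - 1 - i - d)" by (simp only: t3)
        then show ?thesis using 4 d i0 iN mn by auto
      qed (use t1 in auto)
    qed
    finally show "\<xi> (nat \<bar>d\<bar>) * (\<Sum>k\<in>?K. e k d * t k) = \<xi> (nat \<bar>d\<bar>) * t (i + d)" by simp
  qed
  finally have X: "(\<Sum>k\<in>?K. (\<Sum>d\<in>?D. \<xi> (nat \<bar>d\<bar>) * e k d) * t k) = (\<Sum>d\<in>?D. \<xi> (nat \<bar>d\<bar>) * t (i + d))" .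
  show ?thesis unfolding X[symmetric] by (rule sum.cong[OF refl]) (simp only: M)
qed

lemma sym_sum:
  fixes g :: "int \<Rightarrow> complex"
  shows "(\<Sum>d\<in>{-int m..int m}. g d) = g 0 + (\<Sum>l=1..m. g (int l) + g (- int l))"
proof (induction m)
  case 0 then show ?case by simp
next
  case (Suc m)
  have e: "{-int (Suc m)..int (Suc m)} = insert (int (Suc m)) (insert (- int (Suc m)) {-int m..int m})"
    by auto
  show ?case unfolding e using Suc by (simp add: algebra_simps)
qed

definition tt :: "nat \<Rightarrow> nat \<Rightarrow> int \<Rightarrow> complex" where
  "tt n j z = complex_of_real (sin (real j * pi / (real n + 1/2) * (real n - of_int z - 1/2)))"

lemma tt_m1: "tt n j (-1) = 0"
proof -
  have "real j * pi / (real n + 1/2) * (real n - of_int (-1) - 1/2) = real j * pi"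
    by (simp add: field_simps)
  then show ?thesis unfolding tt_def by simp
qed

lemma tt_2: "tt n j (-2 - k) = - tt n j k"
proof -
  have "real j * pi / (real n + 1/2) * (real n - of_int (-2 - k) - 1/2)
     = 2 * real j * pi - real j * pi / (real n + 1/2) * (real n - of_int k - 1/2)"
    by (simp add: field_simps)
  then show ?thesis unfolding tt_def by (simp add: sin_diff)
qed

lemma tt_3: "tt n j (2 * int n - 1 - k) = - tt n j k"
proof -
  have "real j * pi / (real n + 1/2) * (real n - of_int (2 * int n - 1 - k) - 1/2)
     = - (real j * pi / (real n + 1/2) * (real n - of_int k - 1/2))"
    by (simp add: field_simps)
  then show ?thesis unfolding tt_def by simp
qed

lemma tt_add: "tt n j (i + int l) + tt n j (i - int l)
   = 2 * complex_of_real (cos (real l * real j * pi * (1 / (real n + 1/2)))) * tt n j i"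
proof -
  let ?a = "real j * pi / (real n + 1/2) * (real n - of_int i - 1/2)"
  let ?b = "real l * real j * pi * (1 / (real n + 1/2))"
  have b: "?b = real l * (real j * pi / (real n + 1/2))" by simp
  have g1: "c * (real n - of_int (i + int l) - 1/2) = c * (real n - of_int i - 1/2) - real l * c" for c :: real
    by (simp add: algebra_simps)
  have g2: "c * (real n - of_int (i - int l) - 1/2) = c * (real n - of_int i - 1/2) + real l * c" for c :: real
    by (simp add: algebra_simps)
  have 1: "real j * pi / (real n + 1/2) * (real n - of_int (i + int l) - 1/2) = ?a - ?b"
    unfolding b by (rule g1)
  have 2: "real j * pi / (real n + 1/2) * (real n - of_int (i - int l) - 1/2) = ?a + ?b"
    unfolding b by (rule g2)
  have g: "sin (a - b) + sin (a + b) = 2 * cos b * sin a" for a b :: real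
    by (simp add: sin_diff sin_add)
  have "sin (?a - ?b) + sin (?a + ?b) = 2 * cos ?b * sin ?a"
    by (rule g)
  then have "complex_of_real (sin (?a - ?b) + sin (?a + ?b)) = complex_of_real (2 * cos ?b * sin ?a)"
    by simp
  then show ?thesis unfolding tt_def 1 2 by simp
qed

lemma full_sum:
  fixes \<xi> :: "nat \<Rightarrow> complex"
  shows "(\<Sum>d\<in>{-int m..int m}. \<xi> (nat \<bar>d\<bar>) * tt n j (i + d))
    = (\<xi> 0 + 2 * (\<Sum>l = 1..m. \<xi> l * complex_of_real (cos (real l * real j * pi * (1 / (real n + 1/2)))))) * tt n j i"
proof -
  have "(\<Sum>d\<in>{-int m..int m}. \<xi> (nat \<bar>d\<bar>) * tt n j (i + d))
     = \<xi> 0 * tt n j i + (\<Sum>l=1..m. \<xi> l * (tt n j (i + int l) + tt n j (i - int l)))"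
    unfolding sym_sum by (simp add: algebra_simps)
  also have "\<dots> = \<xi> 0 * tt n j i + (\<Sum>l=1..m. \<xi> l * (2 * complex_of_real (cos (real l * real j * pi * (1 / (real n + 1/2)))) * tt n j i))"
    unfolding tt_add by (rule refl)
  finally show ?thesis by (simp add: algebra_simps sum_distrib_left sum_distrib_right)
qed

lemma H_simp:
  assumes "i < n" "k < n" "m \<le> n - 1"
  shows "H_entry n m \<xi> (n - k) (n - i) =
    (if 2 * n \<le> m + 1 + i + k then \<xi> (2 * n - 1 - i - k) else 0) + (if i + k + 2 \<le> m then \<xi> (i + k + 2) else 0)"
proof -
  have c1: "(1 \<le> n - k \<and> n - k \<le> m \<and> 1 \<le> n - i \<and> n - i \<le> m - (n - k) + 1) = (2 * n \<le> m + 1 + i + k)"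
    using assms by auto
  have c2: "(\<exists>ja ka. 1 \<le> ja \<and> ja \<le> m - 1 \<and> 1 \<le> ka \<and> ka \<le> m - ja \<and> n - k = n - ja + 1 \<and> n - i = n - ka + 1)
     = (i + k + 2 \<le> m)"
  proof
    assume "i + k + 2 \<le> m"
    then show "\<exists>ja ka. 1 \<le> ja \<and> ja \<le> m - 1 \<and> 1 \<le> ka \<and> ka \<le> m - ja \<and> n - k = n - ja + 1 \<and> n - i = n - ka + 1"
      using assms by (intro exI[of _ "k+1"] exI[of _ "i+1"]) auto
  next
    assume "\<exists>ja ka. 1 \<le> ja \<and> ja \<le> m - 1 \<and> 1 \<le> ka \<and> ka \<le> m - ja \<and> n - k = n - ja + 1 \<and> n - i = n - ka + 1"
    then obtain ja ka where "1 \<le> ja" "ja \<le> m - 1" "1 \<le> ka" "ka \<le> m - ja" "n - k = n - ja + 1" "n - i = n - ka + 1"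
      by blast
    then show "i + k + 2 \<le> m" using assms by auto
  qed
  show ?thesis
  proof (cases "2 * n \<le> m + 1 + i + k")
    case True
    then have "\<not> (i + k + 2 \<le> m)" using assms by auto
    then show ?thesis unfolding H_entry_def c1 using True assms
      by (auto intro!: arg_cong[where f=\<xi>])
  next
    case False
    then show ?thesis unfolding H_entry_def c1 c2 using assms
      by (auto intro!: arg_cong[where f=\<xi>])
  qed
qed

definition FF :: "nat \<Rightarrow> nat \<Rightarrow> nat \<Rightarrow> (nat \<Rightarrow> complex) \<Rightarrow> complex" where
  "FF n m j \<xi> = \<xi> 0 + 2 * (\<Sum>l = 1..m. \<xi> l * complex_of_real (cos (real l * real j * pi * (1 / (real n + 1/2)))))"

lemma row_lemma:
  assumes "i < n" "m \<le> n - 1"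
  shows "(\<Sum>k\<in>{0..<n}. (T_entry m \<xi> (i+1) (k+1) - H_entry n m \<xi> (n-k) (n-i)) * tt n j (int k))
     = FF n m j \<xi> * tt n j (int i)"
proof -
  define Mz where "Mz k = ((if \<bar>k - int i\<bar> \<le> int m then \<xi> (nat \<bar>k - int i\<bar>) else 0)
            - (if 2 * int n \<le> int m + 1 + int i + k then \<xi> (nat (2 * int n - 1 - int i - k)) else 0)
            - (if int i + k + 2 \<le> int m then \<xi> (nat (int i + k + 2)) else 0))" for k
  have "(\<Sum>k\<in>{0..<int n}. Mz k * tt n j k) = (\<Sum>d\<in>{-int m..int m}. \<xi> (nat \<bar>d\<bar>) * tt n j (int i + d))"
    unfolding Mz_def using assms
    by (intro core) (auto simp: tt_m1 tt_2 tt_3)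
  also have "\<dots> = FF n m j \<xi> * tt n j (int i)"
    unfolding full_sum FF_def by simp
  finally have X: "(\<Sum>k\<in>{0..<int n}. Mz k * tt n j k) = FF n m j \<xi> * tt n j (int i)" .
  have "(\<Sum>k\<in>{0..<int n}. Mz k * tt n j k) = (\<Sum>k\<in>{0..<n}. Mz (int k) * tt n j (int k))"
  proof -
    have "{0..<int n} = int ` {0..<n}" by (simp add: image_int_atLeastLessThan)
    then show ?thesis by (simp add: sum.reindex)
  qed
  also have "\<dots> = (\<Sum>k\<in>{0..<n}. (T_entry m \<xi> (i+1) (k+1) - H_entry n m \<xi> (n-k) (n-i)) * tt n j (int k))"
  proof (rule sum.cong[OF refl])
    fix k assume k: "k \<in> {0..<n}"
    then have k'': "k < n" by simp
    have T: "T_entry m \<xi> (i+1) (k+1) = (if \<bar>int k - int i\<bar> \<le> int m then \<xi> (nat \<bar>int k - int i\<bar>) else 0)"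
      unfolding T_entry_def by simp
    have "Mz (int k) = T_entry m \<xi> (i+1) (k+1) - H_entry n m \<xi> (n-k) (n-i)"
      using k assms unfolding T H_simp[OF assms(1) k'' assms(2)]
      unfolding Mz_def by (auto intro!: arg_cong[where f=\<xi>])
    then show "Mz (int k) * tt n j (int k) = (T_entry m \<xi> (i+1) (k+1) - H_entry n m \<xi> (n-k) (n-i)) * tt n j (int k)"
      by simp
  qed
  finally show ?thesis using X by simp
qed

lemma eigvec:
  assumes "m \<le> n - 1"
  shows "(T_mat n m \<xi> - G_mat n m \<xi>) *\<^sub>v vec n (\<lambda>i. C * tt n j (int i)) = FF n m j \<xi> \<cdot>\<^sub>v vec n (\<lambda>i. C * tt n j (int i))"
proof (rule eq_vecI)
  fix i assume i: "i < dim_vec (FF n m j \<xi> \<cdot>\<^sub>v vec n (\<lambda>i. C * tt n j (int i)))"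
  then have i: "i < n" by simp
  have "((T_mat n m \<xi> - G_mat n m \<xi>) *\<^sub>v vec n (\<lambda>i. C * tt n j (int i))) $ i
     = (\<Sum>k\<in>{0..<n}. (T_entry m \<xi> (i+1) (k+1) - H_entry n m \<xi> (n-k) (n-i)) * (C * tt n j (int k)))"
    using i by (simp add: T_mat_def G_mat_def scalar_prod_def)
  also have "\<dots> = C * (\<Sum>k\<in>{0..<n}. (T_entry m \<xi> (i+1) (k+1) - H_entry n m \<xi> (n-k) (n-i)) * tt n j (int k))"
    by (simp add: sum_distrib_left algebra_simps)
  also have "\<dots> = C * (FF n m j \<xi> * tt n j (int i))" using row_lemma[OF i assms] by simp
  finally show "((T_mat n m \<xi> - G_mat n m \<xi>) *\<^sub>v vec n (\<lambda>i. C * tt n j (int i))) $ i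
      = (FF n m j \<xi> \<cdot>\<^sub>v vec n (\<lambda>i. C * tt n j (int i))) $ i" using i by simp
qed (simp add: T_mat_def G_mat_def)

lemma invertible_kernel:
  fixes B :: "complex mat"
  assumes inv: "invertible_mat B" and Bc: "B \<in> carrier_mat n n" and x: "x \<in> carrier_vec n"
    and Bx: "B *\<^sub>v x = 0\<^sub>v n"
  shows "x = 0\<^sub>v n"
proof -
  obtain B' where i1: "B' * B = 1\<^sub>m (dim_row B')" and i2: "B * B' = 1\<^sub>m (dim_row B)"
    using inv unfolding invertible_mat_def inverts_mat_def by blast
  have r: "dim_row B' = n"
    using arg_cong[OF i1, of dim_col] Bc by simp
  have c: "dim_col B' = n"
    using arg_cong[OF i2, of dim_col] Bc by simp
  have B'c: "B' \<in> carrier_mat n n" using r c by auto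
  have "x = 1\<^sub>m n *\<^sub>v x" using x by simp
  also have "\<dots> = (B' * B) *\<^sub>v x" using i1 r by simp
  also have "\<dots> = B' *\<^sub>v (B *\<^sub>v x)" using B'c Bc x by simp
  also have "\<dots> = 0\<^sub>v n" unfolding Bx using B'c
    by (intro eq_vecI) (auto simp: scalar_prod_def)
  finally show ?thesis .
qed

theorem mainTheorem2:
  fixes n m :: nat and \<alpha> \<beta> :: "nat \<Rightarrow> complex" and C :: complex
  assumes "n \<ge> 2" and "1 \<le> m" and "m \<le> n - 1"
    and "invertible_mat (T_mat n m \<beta> - G_mat n m \<beta>)"
    and "C \<noteq> 0"
  shows "\<forall>j \<in> {1..n}.
    (let h = 1 / (real n + 1/2);
         A = T_mat n m \<alpha> - G_mat n m \<alpha>;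
         B = T_mat n m \<beta> - G_mat n m \<beta>;
         lam = (\<alpha> 0 + 2 * (\<Sum>l = 1..m. \<alpha> l * complex_of_real (cos (real l * real j * pi * h)))) /
              (\<beta> 0 + 2 * (\<Sum>l = 1..m. \<beta> l * complex_of_real (cos (real l * real j * pi * h))));
         xj = vec n (\<lambda>i. C * complex_of_real (sin (real j * pi * (real n - real (i + 1) + 1/2) * h)))
     in A *\<^sub>v xj = lam \<cdot>\<^sub>v (B *\<^sub>v xj))"
proof
  fix j assume j: "j \<in> {1..n}"
  define x where "x = vec n (\<lambda>i. C * tt n j (int i))"
  have xe: "vec n (\<lambda>i. C * complex_of_real (sin (real j * pi * (real n - real (i + 1) + 1/2) * (1 / (real n + 1/2)))))
      = x"
  proof -
    have "real j * pi * (real n - real (i + 1) + 1/2) * (1 / (real n + 1/2))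
        = real j * pi / (real n + 1/2) * (real n - of_int (int i) - 1/2)" for i
      by (simp add: field_simps)
    then show ?thesis unfolding x_def tt_def by simp
  qed
  have lamF: "(\<alpha> 0 + 2 * (\<Sum>l = 1..m. \<alpha> l * complex_of_real (cos (real l * real j * pi * (1 / (real n + 1/2)))))) /
              (\<beta> 0 + 2 * (\<Sum>l = 1..m. \<beta> l * complex_of_real (cos (real l * real j * pi * (1 / (real n + 1/2))))))
      = FF n m j \<alpha> / FF n m j \<beta>" unfolding FF_def by simp
  have A: "(T_mat n m \<alpha> - G_mat n m \<alpha>) *\<^sub>v x = FF n m j \<alpha> \<cdot>\<^sub>v x"
    unfolding x_def by (rule eigvec[OF assms(3)])
  have B: "(T_mat n m \<beta> - G_mat n m \<beta>) *\<^sub>v x = FF n m j \<beta> \<cdot>\<^sub>v x"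
    unfolding x_def by (rule eigvec[OF assms(3)])
  have xn0: "x \<noteq> 0\<^sub>v n"
  proof
    assume x0: "x = 0\<^sub>v n"
    have nn: "n - 1 < n" using assms(1) by simp
    have "x $ (n - 1) = C * tt n j (int (n - 1))" unfolding x_def using nn by simp
    moreover have "tt n j (int (n - 1)) \<noteq> 0"
    proof -
      have e: "real j * pi / (real n + 1/2) * (real n - of_int (int (n - 1)) - 1/2) = pi * (real j / (2 * real n + 1))"
        using assms(1) by (simp add: of_nat_diff field_simps)
      have "0 < real j / (2 * real n + 1)" using j by auto
      moreover have "real j / (2 * real n + 1) < 1" using j by auto
      ultimately have "0 < pi * (real j / (2 * real n + 1))" "pi * (real j / (2 * real n + 1)) < pi * 1"
        by (intro mult_pos_pos mult_strict_left_mono; simp)+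
      then have "0 < sin (pi * (real j / (2 * real n + 1)))"
        by (intro sin_gt_zero) simp_all
      then show ?thesis unfolding tt_def e by simp
    qed
    ultimately show False using x0 nn assms(5) by simp
  qed
  have Fb: "FF n m j \<beta> \<noteq> 0"
  proof
    assume F0: "FF n m j \<beta> = 0"
    have "(T_mat n m \<beta> - G_mat n m \<beta>) *\<^sub>v x = 0\<^sub>v n" 
    proof -
      have "0 \<cdot>\<^sub>v x = 0\<^sub>v n" by (intro eq_vecI) (auto simp: x_def)
      then show ?thesis using B F0 by simp
    qed
    moreover have "T_mat n m \<beta> - G_mat n m \<beta> \<in> carrier_mat n n" by (auto simp: T_mat_def G_mat_def)
    moreover have "x \<in> carrier_vec n" by (simp add: x_def)
    ultimately have "x = 0\<^sub>v n"
      using invertible_kernel[OF assms(4)] by blast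
    then show False using xn0 by simp
  qed
  show "let h = 1 / (real n + 1/2);
         A = T_mat n m \<alpha> - G_mat n m \<alpha>;
         B = T_mat n m \<beta> - G_mat n m \<beta>;
         lam = (\<alpha> 0 + 2 * (\<Sum>l = 1..m. \<alpha> l * complex_of_real (cos (real l * real j * pi * h)))) /
              (\<beta> 0 + 2 * (\<Sum>l = 1..m. \<beta> l * complex_of_real (cos (real l * real j * pi * h))));
         xj = vec n (\<lambda>i. C * complex_of_real (sin (real j * pi * (real n - real (i + 1) + 1/2) * h)))
     in A *\<^sub>v xj = lam \<cdot>\<^sub>v (B *\<^sub>v xj)"
    unfolding Let_def xe lamF A B smult_smult_assoc using Fb by simp
qed

end
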